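(* Let $\nabla$ be an ES basic fusion operator with representing basic assignment $\Phi\mapsto\succeq_\Phi$. The following are equivalent: (i) $\nabla$ satisfies (ESF-P); (ii) for every society $N$, every $N$-profile $\Phi$ and all $E,E'\in\mathcal E$ with $|[\![B(E)]\!]|\le 2$, if $B(\nabla(E_i,E))\wedge B(E')\vdash\bot$ for all $i\in N$ then $B(\nabla(\Phi,E))\wedge B(E')\vdash\bot$; (iii) for every society $N$, every $N$-profile $\Phi$ and all interpretations $w,w'$, if $w\succ_{E_i}w'$ for all $i\in N$ then $w\succ_\Phi w'$.
   Context: Setting: epistemic space $(\mathcal E,B,\mathcal L_{\mathcal P})$ ($\mathcal E$ nonempty, $B:\mathcal E\to$ propositional formulas over finite $\mathcal P$, image modulo equivalence exactly the consistent formulas; $\mathcal W_{\mathcal P}$ valuations, $[\![\phi]\!]$ models); agents: well-ordered set $\mathcal S$; society: nonempty finite $N\subseteq\mathcal S$; $N$-profile $\Phi:N\to\mathcal E$, $E_i=\Phi(i)$, identified with $E_i$ if $N=\{i\}$; profiles on $\{i_1<\dots<i_n\}$, $\{j_1<\dots<j_m\}$ equivalent if $n=m$ and entries coincide position-wise. ES basic fusion operator: a map $\nabla(\Phi,E)\in\mathcal E$ with (ESF1) $B(\nabla(\Phi,E))\vdash B(E)$; (ESF2) equivalent profiles and $B(E)\equiv B(E')$ give equivalent $B(\nabla)$; (ESF3) if $B(E)\equiv B(E')\wedge B(E'')$ then $B(\nabla(\Phi,E'))\wedge B(E'')\vdash B(\nabla(\Phi,E))$; (ESF4) if moreover $B(\nabla(\Phi,E'))\wedge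 B(E'')\nvdash\bot$ then $B(\nabla(\Phi,E))\vdash B(\nabla(\Phi,E'))\wedge B(E'')$. Representing basic assignment: the unique $\Phi\mapsto\succeq_\Phi$ (total preorders on $\mathcal W_{\mathcal P}$, $\succ$ strict part, equal on equivalent profiles) with $[\![B(\nabla(\Phi,E))]\!]=\max([\![B(E)]\!],\succeq_\Phi)$, $\max(C,\succeq)=\{c\in C:c\succeq x\ \forall x\in C\}$. (ESF-P): for every society $N$, $N$-profile $\Phi$ and $E,E'$, if $\bigwedge_{i\in N}B(\nabla(E_i,E))\nvdash\bot$ and $B(\nabla(E_i,E))\wedge B(E')\vdash\bot$ for all $i\in N$, then $B(\nabla(\Phi,E))\wedge B(E')\vdash\bot$. *)

theory Defs
  imports Main
begin

datatype 'p form =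
    Atom 'p
  | Bot
  | Neg "'p form"
  | Conj "'p form" "'p form"
  | Disj "'p form" "'p form"
  | Imp "'p form" "'p form"

text \<open>A valuation (interpretation) is the set of atoms it makes true.\<close>
type_synonym 'p valuation = "'p set"

fun sat :: "'p valuation \<Rightarrow> 'p form \<Rightarrow> bool" where
  "sat w (Atom p) = (p \<in> w)"
| "sat w Bot = False"
| "sat w (Neg f) = (\<not> sat w f)"
| "sat w (Conj f g) = (sat w f \<and> sat w g)"
| "sat w (Disj f g) = (sat w f \<or> sat w g)"
| "sat w (Imp f g) = (sat w f \<longrightarrow> sat w g)"

definition models :: "'p form \<Rightarrow> 'p valuation set" where
  "models f = {w. sat w f}"

definition entails :: "'p form \<Rightarrow> 'p form \<Rightarrow> bool" (infix "\<turnstile>" 55) where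
  "f \<turnstile> g \<longleftrightarrow> models f \<subseteq> models g"

definition inconsistent :: "'p form \<Rightarrow> bool" where
  "inconsistent f \<longleftrightarrow> f \<turnstile> Bot"

definition equiv_form :: "'p form \<Rightarrow> 'p form \<Rightarrow> bool" (infix "\<equiv>\<^sub>F" 50) where
  "f \<equiv>\<^sub>F g \<longleftrightarrow> f \<turnstile> g \<and> g \<turnstile> f"

text \<open>The set of epistemic states is the (nonempty) type 'e; B maps states to formulas.
  The image of B modulo equivalence is exactly the consistent formulas.\<close>
definition epistemic_space :: "('e \<Rightarrow> 'p::finite form) \<Rightarrow> bool" where
  "epistemic_space B \<longleftrightarrow>
     (\<forall>E. \<not> inconsistent (B E)) \<and>
     (\<forall>f. \<not> inconsistent f \<longrightarrow> (\<exists>E. B E \<equiv>\<^sub>F f))"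

text \<open>A profile is a partial map from agents to epistemic states whose domain
  (the society) is a nonempty finite set of agents.\<close>
definition profile :: "('s \<rightharpoonup> 'e) \<Rightarrow> bool" where
  "profile \<Phi> \<longleftrightarrow> finite (dom \<Phi>) \<and> dom \<Phi> \<noteq> {}"

definition entries :: "('s::linorder \<rightharpoonup> 'e) \<Rightarrow> 'e list" where
  "entries \<Phi> = map (\<lambda>i. the (\<Phi> i)) (sorted_list_of_set (dom \<Phi>))"

definition equiv_profile :: "('s::linorder \<rightharpoonup> 'e) \<Rightarrow> ('s \<rightharpoonup> 'e) \<Rightarrow> bool" where
  "equiv_profile \<Phi> \<Psi> \<longleftrightarrow> entries \<Phi> = entries \<Psi>"

definition es_basic_fusion ::
  "('e \<Rightarrow> 'p::finite form) \<Rightarrow> (('s::wellorder \<rightharpoonup> 'e) \<Rightarrow> 'e \<Rightarrow> 'e) \<Rightarrow> bool" where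
  "es_basic_fusion B nabla \<longleftrightarrow>
     (\<forall>\<Phi> E. profile \<Phi> \<longrightarrow> B (nabla \<Phi> E) \<turnstile> B E) \<and>
     (\<forall>\<Phi> \<Phi>' E E'. profile \<Phi> \<longrightarrow> profile \<Phi>' \<longrightarrow> equiv_profile \<Phi> \<Phi>' \<longrightarrow> B E \<equiv>\<^sub>F B E' \<longrightarrow>
         B (nabla \<Phi> E) \<equiv>\<^sub>F B (nabla \<Phi>' E')) \<and>
     (\<forall>\<Phi> E E' E''. profile \<Phi> \<longrightarrow> B E \<equiv>\<^sub>F Conj (B E') (B E'') \<longrightarrow>
         Conj (B (nabla \<Phi> E')) (B E'') \<turnstile> B (nabla \<Phi> E)) \<and>
     (\<forall>\<Phi> E E' E''. profile \<Phi> \<longrightarrow> B E \<equiv>\<^sub>F Conj (B E') (B E'') \<longrightarrow>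
         \<not> inconsistent (Conj (B (nabla \<Phi> E')) (B E'')) \<longrightarrow>
         B (nabla \<Phi> E) \<turnstile> Conj (B (nabla \<Phi> E')) (B E''))"

definition total_preorder_on_vals :: "('p valuation \<Rightarrow> 'p valuation \<Rightarrow> bool) \<Rightarrow> bool" where
  "total_preorder_on_vals ge \<longleftrightarrow>
     (\<forall>w w'. ge w w' \<or> ge w' w) \<and> (\<forall>w w' w''. ge w w' \<longrightarrow> ge w' w'' \<longrightarrow> ge w w'')"

definition strict :: "('a \<Rightarrow> 'a \<Rightarrow> bool) \<Rightarrow> 'a \<Rightarrow> 'a \<Rightarrow> bool" where
  "strict ge w w' \<longleftrightarrow> ge w w' \<and> \<not> ge w' w"

definition maxel :: "'a set \<Rightarrow> ('a \<Rightarrow> 'a \<Rightarrow> bool) \<Rightarrow> 'a set" where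
  "maxel C ge = {c \<in> C. \<forall>x\<in>C. ge c x}"

definition represents ::
  "('e \<Rightarrow> 'p::finite form) \<Rightarrow> (('s::wellorder \<rightharpoonup> 'e) \<Rightarrow> 'e \<Rightarrow> 'e)
   \<Rightarrow> (('s \<rightharpoonup> 'e) \<Rightarrow> 'p valuation \<Rightarrow> 'p valuation \<Rightarrow> bool) \<Rightarrow> bool" where
  "represents B nabla ge \<longleftrightarrow>
     (\<forall>\<Phi>. profile \<Phi> \<longrightarrow> total_preorder_on_vals (ge \<Phi>)) \<and>
     (\<forall>\<Phi> \<Psi>. profile \<Phi> \<longrightarrow> profile \<Psi> \<longrightarrow> equiv_profile \<Phi> \<Psi> \<longrightarrow> ge \<Phi> = ge \<Psi>) \<and>
     (\<forall>\<Phi> E. profile \<Phi> \<longrightarrow> models (B (nabla \<Phi> E)) = maxel (models (B E)) (ge \<Phi>))"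

text \<open>The singleton profile of agent i with entry E_i is [i \<mapsto> E_i].
  The big conjunction over i in N is inconsistent iff the intersection of models is empty.\<close>
definition ESF_P :: "('e \<Rightarrow> 'p::finite form) \<Rightarrow> (('s::wellorder \<rightharpoonup> 'e) \<Rightarrow> 'e \<Rightarrow> 'e) \<Rightarrow> bool" where
  "ESF_P B nabla \<longleftrightarrow>
     (\<forall>\<Phi> E E'. profile \<Phi> \<longrightarrow>
        (\<Inter>i\<in>dom \<Phi>. models (B (nabla [i \<mapsto> the (\<Phi> i)] E))) \<noteq> {} \<longrightarrow>
        (\<forall>i\<in>dom \<Phi>. inconsistent (Conj (B (nabla [i \<mapsto> the (\<Phi> i)] E)) (B E'))) \<longrightarrow>
        inconsistent (Conj (B (nabla \<Phi> E)) (B E')))"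

definition ESF_P2 :: "('e \<Rightarrow> 'p::finite form) \<Rightarrow> (('s::wellorder \<rightharpoonup> 'e) \<Rightarrow> 'e \<Rightarrow> 'e) \<Rightarrow> bool" where
  "ESF_P2 B nabla \<longleftrightarrow>
     (\<forall>\<Phi> E E'. profile \<Phi> \<longrightarrow> card (models (B E)) \<le> 2 \<longrightarrow>
        (\<forall>i\<in>dom \<Phi>. inconsistent (Conj (B (nabla [i \<mapsto> the (\<Phi> i)] E)) (B E'))) \<longrightarrow>
        inconsistent (Conj (B (nabla \<Phi> E)) (B E')))"

definition pareto_assignment ::
  "(('s \<rightharpoonup> 'e) \<Rightarrow> 'p valuation \<Rightarrow> 'p valuation \<Rightarrow> bool) \<Rightarrow> bool" where
  "pareto_assignment ge \<longleftrightarrow>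
     (\<forall>\<Phi> w w'. profile \<Phi> \<longrightarrow>
        (\<forall>i\<in>dom \<Phi>. strict (ge [i \<mapsto> the (\<Phi> i)]) w w') \<longrightarrow> strict (ge \<Phi>) w w')"

end

theory Submission
  imports Defs
begin

fun conjs :: "'p form list \<Rightarrow> 'p form" where
  "conjs [] = Neg Bot"
| "conjs (f#fs) = Conj f (conjs fs)"

lemma sat_conjs: "sat v (conjs fs) = (\<forall>f\<in>set fs. sat v f)"
  by (induct fs) auto

definition lit :: "'p valuation \<Rightarrow> 'p \<Rightarrow> 'p form" where
  "lit w p = (if p \<in> w then Atom p else Neg (Atom p))"

lemma sat_lit: "sat v (lit w p) \<longleftrightarrow> (p \<in> v \<longleftrightarrow> p \<in> w)"
  by (simp add: lit_def)

definition charf :: "'p::finite valuation \<Rightarrow> 'p form" where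
  "charf w = conjs (map (lit w) (SOME xs. set xs = UNIV))"

lemma sat_charf: "sat v (charf (w::'p::finite valuation)) \<longleftrightarrow> v = w"
proof -
  have s: "set (SOME xs. set xs = (UNIV::'p set)) = UNIV"
    by (rule someI_ex) (rule finite_list, simp)
  have "sat v (charf w) \<longleftrightarrow> (\<forall>p. sat v (lit w p))"
    unfolding charf_def sat_conjs set_map s by blast
  also have "\<dots> \<longleftrightarrow> (\<forall>p. p \<in> v \<longleftrightarrow> p \<in> w)" by (simp only: sat_lit)
  also have "\<dots> \<longleftrightarrow> v = w" by blast
  finally show ?thesis .
qed

lemma models_Conj: "models (Conj f g) = models f \<inter> models g"
  by (auto simp: models_def)

lemma inconsistent_iff: "inconsistent f \<longleftrightarrow> models f = {}"
  by (auto simp: inconsistent_def entails_def models_def)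

lemma equiv_models: "f \<equiv>\<^sub>F g \<Longrightarrow> models f = models g"
  by (auto simp: equiv_form_def entails_def)

lemma profile_single: "profile [i \<mapsto> x]"
  by (simp add: profile_def)

lemma tp_refl: "total_preorder_on_vals ge \<Longrightarrow> ge w w"
  unfolding total_preorder_on_vals_def by blast

lemma strict_of_max:
  assumes tp: "total_preorder_on_vals ge" and a: "a \<in> maxel C ge" and b: "b \<in> C" "b \<notin> maxel C ge"
  shows "strict ge a b"
proof -
  have ab: "ge a b" using a b by (auto simp: maxel_def)
  have "\<not> ge b a"
  proof
    assume "ge b a"
    then have "\<forall>x\<in>C. ge b x" using a tp unfolding maxel_def total_preorder_on_vals_def by blast
    then show False using b by (auto simp: maxel_def)
  qed
  then show ?thesis using ab by (simp add: strict_def)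
qed

lemma pareto_to_P:
  assumes R: "\<And>\<Phi>. profile \<Phi> \<Longrightarrow> total_preorder_on_vals (ge \<Phi>)"
    and M: "\<And>\<Phi> E. profile \<Phi> \<Longrightarrow> models (B (nabla \<Phi> E)) = maxel (models (B E)) (ge \<Phi>)"
    and P: "pareto_assignment ge"
  shows "ESF_P B nabla"
  unfolding ESF_P_def
proof (intro allI impI)
  fix \<Phi> E E'
  assume prof: "profile \<Phi>"
    and ne: "(\<Inter>i\<in>dom \<Phi>. models (B (nabla [i \<mapsto> the (\<Phi> i)] E))) \<noteq> {}"
    and inc: "\<forall>i\<in>dom \<Phi>. inconsistent (Conj (B (nabla [i \<mapsto> the (\<Phi> i)] E)) (B E'))"
  obtain w0 where w0: "\<forall>i\<in>dom \<Phi>. w0 \<in> models (B (nabla [i \<mapsto> the (\<Phi> i)] E))" using ne by blast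
  show "inconsistent (Conj (B (nabla \<Phi> E)) (B E'))"
    unfolding inconsistent_iff models_Conj
  proof (rule ccontr)
    assume "models (B (nabla \<Phi> E)) \<inter> models (B E') \<noteq> {}"
    then obtain w where w1: "w \<in> models (B (nabla \<Phi> E))" and w2: "w \<in> models (B E')" by blast
    have wm: "w \<in> maxel (models (B E)) (ge \<Phi>)" using w1 M[OF prof] by simp
    have st: "\<forall>i\<in>dom \<Phi>. strict (ge [i \<mapsto> the (\<Phi> i)]) w0 w"
    proof
      fix i assume i: "i \<in> dom \<Phi>"
      have Mi: "models (B (nabla [i \<mapsto> the (\<Phi> i)] E)) = maxel (models (B E)) (ge [i \<mapsto> the (\<Phi> i)])"
        using M[OF profile_single] .
      have "w \<notin> models (B (nabla [i \<mapsto> the (\<Phi> i)] E))"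
        using inc i w2 unfolding inconsistent_iff models_Conj by blast
      then have a: "w \<notin> maxel (models (B E)) (ge [i \<mapsto> the (\<Phi> i)])" using Mi by simp
      have b0: "w0 \<in> models (B (nabla [i \<mapsto> the (\<Phi> i)] E))" using w0 i by blast
      have b: "w0 \<in> maxel (models (B E)) (ge [i \<mapsto> the (\<Phi> i)])" using b0 unfolding Mi .
      have c: "w \<in> models (B E)" using wm by (simp add: maxel_def)
      show "strict (ge [i \<mapsto> the (\<Phi> i)]) w0 w"
        by (rule strict_of_max[OF R[OF profile_single] b c a])
    qed
    have "strict (ge \<Phi>) w0 w" using P prof st unfolding pareto_assignment_def by blast
    moreover have "w0 \<in> models (B E)"
    proof -
      obtain i where "i \<in> dom \<Phi>" using prof unfolding profile_def by blast
      then show ?thesis using w0 M[OF profile_single] by (auto simp: maxel_def)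
    qed
    ultimately show False using wm by (auto simp: maxel_def strict_def)
  qed
qed

lemma P_to_P2:
  assumes ES: "epistemic_space B"
    and R: "\<And>\<Phi>. profile \<Phi> \<Longrightarrow> total_preorder_on_vals (ge \<Phi>)"
    and M: "\<And>\<Phi> E. profile \<Phi> \<Longrightarrow> models (B (nabla \<Phi> E)) = maxel (models (B E)) (ge \<Phi>)"
    and P: "ESF_P B nabla"
  shows "ESF_P2 B nabla"
  unfolding ESF_P2_def
proof (intro allI impI)
  fix \<Phi> E E'
  assume prof: "profile \<Phi>" and c2: "card (models (B E)) \<le> 2"
    and inc: "\<forall>i\<in>dom \<Phi>. inconsistent (Conj (B (nabla [i \<mapsto> the (\<Phi> i)] E)) (B E'))"
  have cons: "\<And>X. models (B X) \<noteq> {}" using ES unfolding epistemic_space_def inconsistent_iff by blast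
  let ?m = "\<lambda>i. models (B (nabla [i \<mapsto> the (\<Phi> i)] E))"
  show "inconsistent (Conj (B (nabla \<Phi> E)) (B E'))"
  proof (cases "(\<Inter>i\<in>dom \<Phi>. ?m i) \<noteq> {}")
    case True
    show ?thesis using P[unfolded ESF_P_def, rule_format, OF prof True] inc by blast
  next
    case False
    have sub: "\<And>i. ?m i \<subseteq> models (B E)" using M[OF profile_single] by (auto simp: maxel_def)
    have fin: "finite (models (B E))" by simp
    have cov: "models (B E) \<subseteq> (\<Union>i\<in>dom \<Phi>. ?m i)"
    proof
      fix w assume w: "w \<in> models (B E)"
      have "w \<notin> (\<Inter>i\<in>dom \<Phi>. ?m i)" using False by simp
      then obtain i where i: "i \<in> dom \<Phi>" and wi: "w \<notin> ?m i" by (simp only: INT_iff) blast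
      obtain a where a: "a \<in> ?m i" using cons by blast
      have aw: "a \<noteq> w" using a wi by blast
      have aE: "a \<in> models (B E)" using a sub by blast
      have ab: "models (B E) = {a, w}"
      proof -
        have s1: "{a, w} \<subseteq> models (B E)" using aE w by simp
        have "card {a, w} = 2" using aw by simp
        then have "card (models (B E)) \<le> card {a, w}" using c2 by simp
        then show ?thesis using card_seteq[OF fin s1] by simp
      qed
      have "a \<notin> (\<Inter>i\<in>dom \<Phi>. ?m i)" using False by simp
      then obtain j where j: "j \<in> dom \<Phi>" and aj: "a \<notin> ?m j" by (simp only: INT_iff) blast
      obtain b where b: "b \<in> ?m j" using cons by blast
      have "b \<in> {a, w}" using b sub[of j] ab by blast
      then have "b = w" using aj b by auto
      then show "w \<in> (\<Union>i\<in>dom \<Phi>. ?m i)" using b j by blast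
    qed
    have dis: "models (B E) \<inter> models (B E') = {}"
    proof (rule ccontr)
      assume "models (B E) \<inter> models (B E') \<noteq> {}"
      then obtain w where w: "w \<in> models (B E)" "w \<in> models (B E')" by blast
      then obtain i where i: "i \<in> dom \<Phi>" "w \<in> ?m i" using cov by blast
      have "?m i \<inter> models (B E') = {}" using inc i(1) unfolding inconsistent_iff models_Conj by blast
      then show False using i(2) w(2) by blast
    qed
    moreover have "models (B (nabla \<Phi> E)) \<subseteq> models (B E)" using M[OF prof] by (auto simp: maxel_def)
    ultimately show ?thesis unfolding inconsistent_iff models_Conj by blast
  qed
qed

lemma P2_to_pareto:
  assumes ES: "epistemic_space B"
    and R: "\<And>\<Phi>. profile \<Phi> \<Longrightarrow> total_preorder_on_vals (ge \<Phi>)"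
    and M: "\<And>\<Phi> E. profile \<Phi> \<Longrightarrow> models (B (nabla \<Phi> E)) = maxel (models (B E)) (ge \<Phi>)"
    and P: "ESF_P2 B nabla"
  shows "pareto_assignment ge"
  unfolding pareto_assignment_def
proof (intro allI impI)
  fix \<Phi> w w'
  assume prof: "profile \<Phi>" and st: "\<forall>i\<in>dom \<Phi>. strict (ge [i \<mapsto> the (\<Phi> i)]) w w'"
  have rep: "\<And>f. models f \<noteq> {} \<Longrightarrow> \<exists>E. models (B E) = models f"
    using ES unfolding epistemic_space_def inconsistent_iff by (metis equiv_models)
  obtain E where E: "models (B E) = models (Disj (charf w) (charf w'))"
    using rep[of "Disj (charf w) (charf w')"] by (auto simp: models_def sat_charf)
  obtain E' where E': "models (B E') = models (charf w')"
    using rep[of "charf w'"] by (auto simp: models_def sat_charf)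
  have mE: "models (B E) = {w, w'}" using E by (auto simp: models_def sat_charf)
  have mE': "models (B E') = {w'}" using E' by (auto simp: models_def sat_charf)
  have c: "card (models (B E)) \<le> 2" unfolding mE by (simp add: card_insert_le_m1)
  have "\<forall>i\<in>dom \<Phi>. inconsistent (Conj (B (nabla [i \<mapsto> the (\<Phi> i)] E)) (B E'))"
  proof
    fix i assume i: "i \<in> dom \<Phi>"
    have "w' \<notin> maxel {w, w'} (ge [i \<mapsto> the (\<Phi> i)])"
      using st i by (auto simp: maxel_def strict_def)
    then show "inconsistent (Conj (B (nabla [i \<mapsto> the (\<Phi> i)] E)) (B E'))"
      unfolding inconsistent_iff models_Conj M[OF profile_single] mE mE' by blast
  qed
  then have "inconsistent (Conj (B (nabla \<Phi> E)) (B E'))" using P prof c unfolding ESF_P2_def by blast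
  then have "w' \<notin> maxel {w, w'} (ge \<Phi>)"
    unfolding inconsistent_iff models_Conj M[OF prof] mE mE' by blast
  then have "\<not> ge \<Phi> w' w" using tp_refl[OF R[OF prof]] by (auto simp: maxel_def)
  moreover have "ge \<Phi> w w'" using calculation R[OF prof] unfolding total_preorder_on_vals_def by blast
  ultimately show "strict (ge \<Phi>) w w'" by (simp add: strict_def)
qed

theorem mainTheorem10:
  fixes B :: "'e \<Rightarrow> 'p::finite form"
    and nabla :: "('s::wellorder \<rightharpoonup> 'e) \<Rightarrow> 'e \<Rightarrow> 'e"
    and ge :: "('s \<rightharpoonup> 'e) \<Rightarrow> 'p set \<Rightarrow> 'p set \<Rightarrow> bool"
  assumes "epistemic_space B"
    and "es_basic_fusion B nabla"
    and "represents B nabla ge"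
  shows "(ESF_P B nabla \<longleftrightarrow> ESF_P2 B nabla) \<and> (ESF_P2 B nabla \<longleftrightarrow> pareto_assignment ge)"
proof -
  have R: "\<And>\<Phi>. profile \<Phi> \<Longrightarrow> total_preorder_on_vals (ge \<Phi>)"
    and M: "\<And>\<Phi> E. profile \<Phi> \<Longrightarrow> models (B (nabla \<Phi> E)) = maxel (models (B E)) (ge \<Phi>)"
    using assms(3) unfolding represents_def by blast+
  have 1: "ESF_P B nabla \<Longrightarrow> ESF_P2 B nabla" using P_to_P2[where B=B and ge=ge and nabla=nabla, OF assms(1) R M] by blast
  have 2: "ESF_P2 B nabla \<Longrightarrow> pareto_assignment ge" using P2_to_pareto[where B=B and ge=ge and nabla=nabla, OF assms(1) R M] by blast
  have 3: "pareto_assignment ge \<Longrightarrow> ESF_P B nabla" using pareto_to_P[where B=B and ge=ge and nabla=nabla, OF R M] by blast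
  show ?thesis using 1 2 3 by blast
qed

end
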